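(* Under the standing assumptions below, the Bellman operator $\mathcal B$ maps $\mathcal N$ into itself: $\mathcal B(\mathcal N)\subset\mathcal N$.
   Context: Setup. Let $\mathcal S$ be a finite set and $(s_t)_{t\ge0}$ a Markov chain on $\mathcal S$ with transition probabilities $\pi(s'|s)>0$ for all $s,s'\in\mathcal S$; $\mathbb E_{s_t}$ denotes expectation over future shocks conditional on the history $s^t=(s_0,\dots,s_t)$. Let $\mathcal A\subset\mathbb R^n$ be a finite set, $\mathcal X\subseteq\mathbb R^m$ a countable set, $\zeta:\mathcal X\times\mathcal A\times\mathcal S\to\mathcal X$, $p:\mathcal X\times\mathcal A\times\mathcal S\to\mathbb R$, $r,g^1,\dots,g^I:\mathcal X\times\mathcal A\times\mathcal S\to\mathbb R$ bounded functions, $\bar g^1,\dots,\bar g^I\in\mathbb R$ and $\beta\in(0,1)$. A plan is a family $a=(a(s^t))_{t\ge0,\,s^t\in\mathcal S^{t+1}}$ with $a(s^t)\in\mathcal A$; given $x_0$ it induces states $x(s^0)=x_0$, $x(s^{t+1})=\zeta(x(s^t),a(s^t),s_t)$. Let $\tilde{\mathcal A}(x,s)=\{a\in\mathcal A:p(x,a,s)\ge0\}$ and $\tilde{\mathcal A}^\infty(x_0)$ the set of plans with $a(s^t)\in\tilde{\mathcal A}(x(s^t),s_t)$ for all $t,s^t$. A plan is feasible for $(x_0,s_0)$ if it lies in $\tilde{\mathcal A}^\infty(x_0)$ and $\mathbb E_{s_t}\sum_{n\ge0}\beta^ng^i(x(s^{t+n}),a(s^{t+n}),s_{t+n})\ge\bar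 g^i$ for all $t,s^t,i$. Standing assumption: for every $(x_0,s_0)$ a feasible plan exists. Function spaces. Let $L=(\|r\|_\infty+\sum_{i=1}^I\|g^i\|_\infty)/(1-\beta)$, $B(k)=\{\gamma\in\mathbb R^I_+:\|\gamma\|_\infty\le k\}$, and enumerate $\mathcal S=\{s_1,\dots,s_{|\mathcal S|}\}$, $\mathcal X=\{x_1,x_2,\dots\}$. $\mathcal M$ is the set of $F:\mathbb R^I_+\times\mathcal X\times\mathcal S\to\mathbb R$ with $F(\cdot,x,s)\in L^\infty(B(k))$ for all $k\in\mathbb N_+$, $x,s$, and $\|F\|_{\mathcal M}:=\sum_{i}2^{-i}\sum_j2^{-j}\sum_{k\ge1}2^{-k}\|F(\cdot,x_j,s_i)\|_{L^\infty(B(k))}<\infty$. $\mathcal N\subset\mathcal M$ is the set of $F\in\mathcal M$ such that for all $x,s$: (i) $F(\cdot,x,s)$ is convex; (ii) $|F(\gamma_1,x,s)-F(\gamma_2,x,s)|\le L\|\gamma_1-\gamma_2\|_1$; (iii) $F(\gamma,x,s)\ge v^0+\sum_i\gamma^iv^i$ for every feasible plan for $(x,s)$, where $v^0=\mathbb E_{s}\sum_t\beta^tr(x(s^t),a(s^t),s_t)$, $v^i=\mathbb E_s\sum_t\beta^tg^i(x(s^t),a(s^t),s_t)$ (with $x_0=x,s_0=s$); (iv) $F(\gamma,x,s)\le(1+\sum_i\gamma^i)L$. Bellman operator: for $F:\mathbb R^I_+\times\mathcal X\times\mathcal S\to\mathbb R$, $\mathcal B(F)(\gamma,x,s)=\inf_{\lambda\in\mathbb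 R^I_+}\sup_{a\in\tilde{\mathcal A}(x,s)}\big[r(x,a,s)+\sum_i(\gamma^ig^i(x,a,s)+\lambda^i(g^i(x,a,s)-\bar g^i))+\beta\mathbb E_sF(\gamma+\lambda,\zeta(x,a,s),s')\big]$, where $\mathbb E_s$ is expectation over $s'\sim\pi(\cdot|s)$. *)

theory Defs
  imports "HOL-Probability.Probability"
begin

text \<open>Histories s^t = (s_0,...,s_t) are nonempty lists of shocks.
  The state path induced by a plan a from x_0: x(s^0) = x_0,
  x(s^{t+1}) = zeta(x(s^t), a(s^t), s_t).  xrev works on reversed histories.\<close>

fun xrev :: "('x \<Rightarrow> 'a \<Rightarrow> 's \<Rightarrow> 'x) \<Rightarrow> ('s list \<Rightarrow> 'a) \<Rightarrow> 'x \<Rightarrow> 's list \<Rightarrow> 'x" where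
  "xrev zeta a x0 [] = x0"
| "xrev zeta a x0 [s] = x0"
| "xrev zeta a x0 (s # s' # r) = zeta (xrev zeta a x0 (s' # r)) (a (rev (s' # r))) s'"

definition xstate :: "('x \<Rightarrow> 'a \<Rightarrow> 's \<Rightarrow> 'x) \<Rightarrow> ('s list \<Rightarrow> 'a) \<Rightarrow> 'x \<Rightarrow> 's list \<Rightarrow> 'x" where
  "xstate zeta a x0 h = xrev zeta a x0 (rev h)"

text \<open>Probability of a continuation c = (s_{t+1},...,s_{t+n}) of the chain started at s.
  Ptr s s' is the transition probability Ptr(s'|s).\<close>

fun cont_prob :: "('s \<Rightarrow> 's \<Rightarrow> real) \<Rightarrow> 's \<Rightarrow> 's list \<Rightarrow> real" where
  "cont_prob Ptr s [] = 1"
| "cont_prob Ptr s (s' # c) = Ptr s s' * cont_prob Ptr s' c"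

text \<open>E_{s_t} f(s^{t+n}): conditional expectation given the history h = s^t.\<close>

definition cond_exp :: "('s::finite \<Rightarrow> 's \<Rightarrow> real) \<Rightarrow> 's list \<Rightarrow> nat \<Rightarrow> ('s list \<Rightarrow> real) \<Rightarrow> real" where
  "cond_exp Ptr h n f = (\<Sum>c\<in>{c. length c = n}. cont_prob Ptr (last h) c * f (h @ c))"

text \<open>E_{s_t} sum_{n>=0} beta^n f(s^{t+n}) (f bounded, so expectation and sum commute).\<close>

definition disc_val :: "('s::finite \<Rightarrow> 's \<Rightarrow> real) \<Rightarrow> real \<Rightarrow> 's list \<Rightarrow> ('s list \<Rightarrow> real) \<Rightarrow> real" where
  "disc_val Ptr beta h f = (\<Sum>n. beta ^ n * cond_exp Ptr h n f)"

definition Atil :: "'a set \<Rightarrow> ('x \<Rightarrow> 'a \<Rightarrow> 's \<Rightarrow> real) \<Rightarrow> 'x \<Rightarrow> 's \<Rightarrow> 'a set" where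
  "Atil A p x s = {a\<in>A. p x a s \<ge> 0}"

definition feasible :: "('s::finite \<Rightarrow> 's \<Rightarrow> real) \<Rightarrow> real \<Rightarrow> 'a set \<Rightarrow> ('x \<Rightarrow> 'a \<Rightarrow> 's \<Rightarrow> 'x)
   \<Rightarrow> ('x \<Rightarrow> 'a \<Rightarrow> 's \<Rightarrow> real) \<Rightarrow> ('i \<Rightarrow> 'x \<Rightarrow> 'a \<Rightarrow> 's \<Rightarrow> real) \<Rightarrow> ('i \<Rightarrow> real)
   \<Rightarrow> 'x \<Rightarrow> 's \<Rightarrow> ('s list \<Rightarrow> 'a) \<Rightarrow> bool" where
  "feasible Ptr beta A zeta p g gbar x0 s0 a \<longleftrightarrow>
     (\<forall>h. h \<noteq> [] \<and> hd h = s0 \<longrightarrow> a h \<in> Atil A p (xstate zeta a x0 h) (last h)) \<and>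
     (\<forall>h i. h \<noteq> [] \<and> hd h = s0 \<longrightarrow>
        disc_val Ptr beta h (\<lambda>h'. g i (xstate zeta a x0 h') (a h') (last h')) \<ge> gbar i)"

definition plan_val :: "('s::finite \<Rightarrow> 's \<Rightarrow> real) \<Rightarrow> real \<Rightarrow> ('x \<Rightarrow> 'a \<Rightarrow> 's \<Rightarrow> 'x)
   \<Rightarrow> ('x \<Rightarrow> 'a \<Rightarrow> 's \<Rightarrow> real) \<Rightarrow> 'x \<Rightarrow> 's \<Rightarrow> ('s list \<Rightarrow> 'a) \<Rightarrow> real" where
  "plan_val Ptr beta zeta f x0 s0 a = disc_val Ptr beta [s0] (\<lambda>h. f (xstate zeta a x0 h) (a h) (last h))"

definition supnorm :: "'x set \<Rightarrow> 'a set \<Rightarrow> ('x \<Rightarrow> 'a \<Rightarrow> 's \<Rightarrow> real) \<Rightarrow> real" where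
  "supnorm X A f = (SUP z \<in> X \<times> A \<times> UNIV. \<bar>f (fst z) (fst (snd z)) (snd (snd z))\<bar>)"

definition Lconst :: "real \<Rightarrow> 'x set \<Rightarrow> 'a set \<Rightarrow> ('x \<Rightarrow> 'a \<Rightarrow> 's \<Rightarrow> real)
   \<Rightarrow> ('i::finite \<Rightarrow> 'x \<Rightarrow> 'a \<Rightarrow> 's \<Rightarrow> real) \<Rightarrow> real" where
  "Lconst beta X A r g = (supnorm X A r + (\<Sum>i\<in>UNIV. supnorm X A (g i))) / (1 - beta)"

definition Bk :: "real \<Rightarrow> (real^'i) set" where
  "Bk k = {\<gamma>. \<forall>i. 0 \<le> \<gamma> $ i \<and> \<gamma> $ i \<le> k}"

definition nonneg :: "(real^'i) set" where
  "nonneg = {\<gamma>. \<forall>i. 0 \<le> \<gamma> $ i}"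

text \<open>L^infinity(K) norm w.r.t. Lebesgue measure; it is finite iff f is in L^infinity(K)
  (esssup is \<infinity> for non-measurable functions).\<close>
definition Linf_norm :: "(real^'i) set \<Rightarrow> (real^'i \<Rightarrow> real) \<Rightarrow> ereal" where
  "Linf_norm K f = esssup (restrict_space lebesgue K) (\<lambda>\<gamma>. ereal \<bar>f \<gamma>\<bar>)"

text \<open>The space M, relative to enumerations se of S (indices 1..|S|) and xe of X
  (indices J = {1..|X|} or {1,2,...}).\<close>
definition enum_index :: "'x set \<Rightarrow> nat set" where
  "enum_index X = {j. 1 \<le> j \<and> (finite X \<longrightarrow> j \<le> card X)}"

definition M_norm :: "(nat \<Rightarrow> 's) \<Rightarrow> (nat \<Rightarrow> 'x) \<Rightarrow> 'x set
    \<Rightarrow> (real^'i \<Rightarrow> 'x \<Rightarrow> 's \<Rightarrow> real) \<Rightarrow> ereal" where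
  "M_norm se xe X F =
     (\<Sum>i\<in>{1..CARD('s)}. ereal ((1/2) ^ i) *
        (\<Sum>j. (if j \<in> enum_index X then ereal ((1/2) ^ j) else 0) *
           (\<Sum>k. ereal ((1/2) ^ Suc k) *
               Linf_norm (Bk (real (Suc k))) (\<lambda>\<gamma>. F \<gamma> (xe j) (se i)))))"

definition Mspace :: "(nat \<Rightarrow> 's) \<Rightarrow> (nat \<Rightarrow> 'x) \<Rightarrow> 'x set
    \<Rightarrow> (real^'i \<Rightarrow> 'x \<Rightarrow> 's \<Rightarrow> real) set" where
  "Mspace se xe X = {F. (\<forall>x\<in>X. \<forall>s. \<forall>k::nat. k \<ge> 1 \<longrightarrow>
                           Linf_norm (Bk (real k)) (\<lambda>\<gamma>. F \<gamma> x s) < \<infinity>)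
                       \<and> M_norm se xe X F < \<infinity>}"

definition Nspace :: "(nat \<Rightarrow> 's::finite) \<Rightarrow> (nat \<Rightarrow> 'x) \<Rightarrow> 'x set
    \<Rightarrow> ('s \<Rightarrow> 's \<Rightarrow> real) \<Rightarrow> real \<Rightarrow> 'a set \<Rightarrow> ('x \<Rightarrow> 'a \<Rightarrow> 's \<Rightarrow> 'x)
    \<Rightarrow> ('x \<Rightarrow> 'a \<Rightarrow> 's \<Rightarrow> real) \<Rightarrow> ('x \<Rightarrow> 'a \<Rightarrow> 's \<Rightarrow> real)
    \<Rightarrow> ('i::finite \<Rightarrow> 'x \<Rightarrow> 'a \<Rightarrow> 's \<Rightarrow> real) \<Rightarrow> ('i \<Rightarrow> real)
    \<Rightarrow> (real^'i \<Rightarrow> 'x \<Rightarrow> 's \<Rightarrow> real) set" where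
  "Nspace se xe X Ptr beta A zeta p r g gbar =
    {F \<in> Mspace se xe X. \<forall>x\<in>X. \<forall>s.
       convex_on nonneg (\<lambda>\<gamma>. F \<gamma> x s) \<and>
       (\<forall>\<gamma>1\<in>nonneg. \<forall>\<gamma>2\<in>nonneg. \<bar>F \<gamma>1 x s - F \<gamma>2 x s\<bar>
            \<le> Lconst beta X A r g * (\<Sum>i\<in>UNIV. \<bar>\<gamma>1 $ i - \<gamma>2 $ i\<bar>)) \<and>
       (\<forall>\<gamma>\<in>nonneg. \<forall>a. feasible Ptr beta A zeta p g gbar x s a \<longrightarrow>
            F \<gamma> x s \<ge> plan_val Ptr beta zeta r x s a
                      + (\<Sum>i\<in>UNIV. \<gamma> $ i * plan_val Ptr beta zeta (g i) x s a)) \<and>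
       (\<forall>\<gamma>\<in>nonneg. F \<gamma> x s \<le> (1 + (\<Sum>i\<in>UNIV. \<gamma> $ i)) * Lconst beta X A r g)}"

definition Bellman :: "('s::finite \<Rightarrow> 's \<Rightarrow> real) \<Rightarrow> real \<Rightarrow> 'a set \<Rightarrow> ('x \<Rightarrow> 'a \<Rightarrow> 's \<Rightarrow> 'x)
    \<Rightarrow> ('x \<Rightarrow> 'a \<Rightarrow> 's \<Rightarrow> real) \<Rightarrow> ('x \<Rightarrow> 'a \<Rightarrow> 's \<Rightarrow> real)
    \<Rightarrow> ('i::finite \<Rightarrow> 'x \<Rightarrow> 'a \<Rightarrow> 's \<Rightarrow> real) \<Rightarrow> ('i \<Rightarrow> real)
    \<Rightarrow> (real^'i \<Rightarrow> 'x \<Rightarrow> 's \<Rightarrow> real) \<Rightarrow> (real^'i \<Rightarrow> 'x \<Rightarrow> 's \<Rightarrow> real)" where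
  "Bellman Ptr beta A zeta p r g gbar F = (\<lambda>\<gamma> x s.
     INF lam\<in>nonneg. SUP a\<in>Atil A p x s.
        r x a s + (\<Sum>i\<in>UNIV. \<gamma> $ i * g i x a s + lam $ i * (g i x a s - gbar i))
        + beta * (\<Sum>s'\<in>UNIV. Ptr s s' * F (\<gamma> + lam) (zeta x a s) s'))"

end

theory Submission
  imports Defs
begin

lemma finite_len: "finite {c::'s::finite list. length c = n}"
  using finite_lists_length_eq[of "UNIV::'s set" n] by simp

lemma cont_prob_nonneg:
  assumes "\<And>s s'. Ptr s s' \<ge> 0" shows "cont_prob Ptr s c \<ge> 0"
  using assms by (induction c arbitrary: s) auto

lemma len_Suc_eq: "{c::'s list. length c = Suc n} = (\<lambda>(s', c). s' # c) ` (UNIV \<times> {c. length c = n})"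
  by (auto simp: length_Suc_conv image_iff)

lemma cond_exp_Suc:
  fixes Ptr :: "'s::finite \<Rightarrow> 's \<Rightarrow> real"
  shows "cond_exp Ptr h (Suc n) f = (\<Sum>s'\<in>UNIV. Ptr (last h) s' * cond_exp Ptr (h @ [s']) n f)"
proof -
  have inj: "inj_on (\<lambda>(s', c). s' # c) (UNIV \<times> {c::'s list. length c = n})"
    by (auto simp: inj_on_def)
  have "cond_exp Ptr h (Suc n) f =
     (\<Sum>z\<in>UNIV \<times> {c::'s list. length c = n}. cont_prob Ptr (last h) (fst z # snd z) * f (h @ (fst z # snd z)))"
    unfolding cond_exp_def len_Suc_eq by (subst sum.reindex[OF inj]) (auto simp: case_prod_beta)
  also have "\<dots> = (\<Sum>s'\<in>UNIV. \<Sum>c\<in>{c::'s list. length c = n}. Ptr (last h) s' * (cont_prob Ptr s' c * f (h @ (s' # c))))"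
    unfolding sum.cartesian_product by (simp add: case_prod_beta mult.assoc)
  also have "\<dots> = (\<Sum>s'\<in>UNIV. Ptr (last h) s' * cond_exp Ptr (h @ [s']) n f)"
    unfolding cond_exp_def by (simp add: sum_distrib_left)
  finally show ?thesis .
qed

lemma cond_exp_0: "cond_exp Ptr h 0 f = f h"
proof -
  have "{c::'s list. length c = 0} = {[]}" by auto
  then show ?thesis unfolding cond_exp_def by simp
qed

lemma cont_prob_sum:
  fixes Ptr :: "'s::finite \<Rightarrow> 's \<Rightarrow> real"
  assumes "\<And>s. (\<Sum>s'\<in>UNIV. Ptr s s') = 1"
  shows "(\<Sum>c\<in>{c::'s list. length c = n}. cont_prob Ptr s c) = 1"
proof (induction n arbitrary: s)
  case 0
  have "{c::'s list. length c = 0} = {[]}" by auto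
  then show ?case by simp
next
  case (Suc n)
  have "cond_exp Ptr [s] (Suc n) (\<lambda>_. 1) = (\<Sum>s'\<in>UNIV. Ptr s s' * cond_exp Ptr ([s] @ [s']) n (\<lambda>_. 1))"
    by (subst cond_exp_Suc) simp
  also have "\<dots> = 1" using Suc assms by (simp add: cond_exp_def)
  finally show ?case by (simp add: cond_exp_def)
qed

lemma cond_exp_shift:
  assumes "h \<noteq> []"
  shows "cond_exp Ptr (s0 # h) n f = cond_exp Ptr h n (\<lambda>h'. f (s0 # h'))"
  using assms unfolding cond_exp_def by simp

lemma disc_val_shift:
  assumes "h \<noteq> []"
  shows "disc_val Ptr beta (s0 # h) f = disc_val Ptr beta h (\<lambda>h'. f (s0 # h'))"
  using assms unfolding disc_val_def by (simp add: cond_exp_shift)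

lemma cond_exp_cong:
  assumes "\<And>c. f (h @ c) = f' (h @ c)"
  shows "cond_exp Ptr h n f = cond_exp Ptr h n f'"
  using assms unfolding cond_exp_def by simp

lemma disc_val_cong:
  assumes "\<And>c. f (h @ c) = f' (h @ c)"
  shows "disc_val Ptr beta h f = disc_val Ptr beta h f'"
  using assms unfolding disc_val_def cond_exp_def by simp

locale probs =
  fixes Ptr :: "'s::finite \<Rightarrow> 's \<Rightarrow> real" and beta :: real
  assumes P_nn: "\<And>s s'. Ptr s s' \<ge> 0"
    and P_sum: "\<And>s. (\<Sum>s'\<in>UNIV. Ptr s s') = 1"
    and beta0: "0 \<le> beta" and beta1: "beta < 1"
begin

lemma cond_exp_bound:
  assumes "\<And>c. \<bar>f (h @ c)\<bar> \<le> C"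
  shows "\<bar>cond_exp Ptr h n f\<bar> \<le> C"
proof -
  have "\<bar>cond_exp Ptr h n f\<bar> \<le> (\<Sum>c\<in>{c. length c = n}. \<bar>cont_prob Ptr (last h) c * f (h @ c)\<bar>)"
    unfolding cond_exp_def by (rule sum_abs)
  also have "\<dots> \<le> (\<Sum>c\<in>{c. length c = n}. cont_prob Ptr (last h) c * C)"
    by (intro sum_mono) (simp add: abs_mult cont_prob_nonneg P_nn assms mult_left_mono)
  also have "\<dots> = C"
    by (simp add: sum_distrib_right[symmetric] cont_prob_sum P_sum)
  finally show ?thesis .
qed

lemma disc_summable:
  assumes "\<And>c. \<bar>f (h @ c)\<bar> \<le> C"
  shows "summable (\<lambda>n. beta ^ n * cond_exp Ptr h n f)"
proof (rule summable_comparison_test')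
  show "summable (\<lambda>n. C * beta ^ n)"
    using beta0 beta1 by (intro summable_mult summable_geometric) simp
  fix n
  show "norm (beta ^ n * cond_exp Ptr h n f) \<le> C * beta ^ n"
    using cond_exp_bound[of f h C n, OF assms] beta0
    by (simp add: abs_mult mult.commute[of "beta ^ n"] mult_right_mono)
qed

lemma disc_bound:
  assumes "\<And>c. \<bar>f (h @ c)\<bar> \<le> C"
  shows "\<bar>disc_val Ptr beta h f\<bar> \<le> C / (1 - beta)"
proof -
  have s: "summable (\<lambda>n. C * beta ^ n)"
    using beta0 beta1 by (intro summable_mult summable_geometric) simp
  have le: "\<bar>beta ^ n * cond_exp Ptr h n f\<bar> \<le> C * beta ^ n" for n
      using cond_exp_bound[of f h C n, OF assms] beta0
      by (simp add: abs_mult mult.commute[of "beta ^ n"] mult_right_mono)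
  have sa: "summable (\<lambda>n. \<bar>beta ^ n * cond_exp Ptr h n f\<bar>)"
    by (rule summable_comparison_test'[OF s]) (use le in simp)
  have "\<bar>disc_val Ptr beta h f\<bar> \<le> (\<Sum>n. \<bar>beta ^ n * cond_exp Ptr h n f\<bar>)"
    unfolding disc_val_def by (rule summable_rabs[OF sa])
  also have "\<dots> \<le> (\<Sum>n. C * beta ^ n)"
    by (rule suminf_le[OF le sa s])
  also have "\<dots> = C / (1 - beta)"
    using beta0 beta1 by (simp add: suminf_mult suminf_geometric divide_simps)
  finally show ?thesis .
qed

lemma disc_decomp:
  assumes "\<And>c. \<bar>f (h @ c)\<bar> \<le> C"
  shows "disc_val Ptr beta h f = f h + beta * (\<Sum>s'\<in>UNIV. Ptr (last h) s' * disc_val Ptr beta (h @ [s']) f)"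
proof -
  define G where "G = (\<lambda>n. beta ^ n * cond_exp Ptr h n f)"
  define Gs where "Gs = (\<lambda>s' n. beta ^ n * cond_exp Ptr (h @ [s']) n f)"
  have sm: "summable G" unfolding G_def by (rule disc_summable[of f h C, OF assms])
  have bs: "\<And>c. \<bar>f ((h @ [s']) @ c)\<bar> \<le> C" for s' using assms[of "s' # c" for c] by simp
  have sms: "summable (Gs s')" for s' unfolding Gs_def by (rule disc_summable[of f "h @ [s']" C, OF bs])
  have GS: "G (Suc n) = (\<Sum>s'\<in>UNIV. (beta * Ptr (last h) s') * Gs s' n)" for n
    unfolding G_def Gs_def by (simp add: cond_exp_Suc sum_distrib_left mult_ac)
  have "disc_val Ptr beta h f = G 0 + (\<Sum>n. G (Suc n))"
    unfolding disc_val_def G_def[symmetric] using suminf_split_head[OF sm] by simp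
  also have "G 0 = f h" unfolding G_def by (simp add: cond_exp_0)
  also have "(\<Sum>n. G (Suc n)) = (\<Sum>s'\<in>UNIV. \<Sum>n. (beta * Ptr (last h) s') * Gs s' n)"
    unfolding GS by (rule suminf_sum) (intro summable_mult sms)
  also have "\<dots> = (\<Sum>s'\<in>UNIV. (beta * Ptr (last h) s') * disc_val Ptr beta (h @ [s']) f)"
  proof (intro sum.cong refl)
    fix s' show "(\<Sum>n. beta * Ptr (last h) s' * Gs s' n) = beta * Ptr (last h) s' * disc_val Ptr beta (h @ [s']) f"
      unfolding disc_val_def using suminf_mult[OF sms[of s'], of "beta * Ptr (last h) s'"] by (simp add: Gs_def)
  qed
  finally show ?thesis by (simp add: sum_distrib_left mult_ac)
qed

end

lemma xstate_single[simp]: "xstate zeta a x0 [s] = x0"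
  by (simp add: xstate_def)

lemma xstate_snoc:
  assumes "h \<noteq> []"
  shows "xstate zeta a x0 (h @ [s]) = zeta (xstate zeta a x0 h) (a h) (last h)"
proof -
  obtain s' r where hr: "rev h = s' # r" using assms by (cases "rev h") auto
  then have h: "h = rev r @ [s']" by (metis rev_rev_ident rev.simps(2))
  show ?thesis unfolding xstate_def using hr h by simp
qed

lemma xstate_shift:
  assumes "h \<noteq> []"
  shows "xstate zeta a x0 (s0 # h) = xstate zeta (\<lambda>h'. a (s0 # h')) (zeta x0 (a [s0]) s0) h"
  using assms
proof (induction h rule: rev_induct)
  case Nil then show ?case by simp
next
  case (snoc s h)
  show ?case
  proof (cases "h = []")
    case True
    then show ?thesis using xstate_snoc[of "[s0]" zeta a x0 s] by simp
  next
    case False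
    have "xstate zeta a x0 (s0 # h @ [s]) = zeta (xstate zeta a x0 (s0 # h)) (a (s0 # h)) (last (s0 # h))"
      using xstate_snoc[of "s0 # h" zeta a x0 s] by simp
    also have "\<dots> = xstate zeta (\<lambda>h'. a (s0 # h')) (zeta x0 (a [s0]) s0) (h @ [s])"
      using snoc.IH[OF False] False by (simp add: xstate_snoc)
    finally show ?thesis .
  qed
qed

lemma feasible_in:
  assumes fe: "feasible Ptr beta A zeta p g gbar x0 s0 a" and x0: "x0 \<in> X"
    and zX: "\<And>x a s. x \<in> X \<Longrightarrow> a \<in> A \<Longrightarrow> zeta x a s \<in> X"
  shows "h \<noteq> [] \<Longrightarrow> hd h = s0 \<Longrightarrow> xstate zeta a x0 h \<in> X \<and> a h \<in> A"
proof (induction h rule: rev_induct)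
  case Nil then show ?case by simp
next
  case (snoc s h)
  have aA: "a (h @ [s]) \<in> A" using fe snoc.prems unfolding feasible_def Atil_def by auto
  show ?case
  proof (cases "h = []")
    case True then show ?thesis using x0 aA by simp
  next
    case False
    then have "hd h = s0" using snoc.prems by simp
    with snoc.IH False have "xstate zeta a x0 h \<in> X \<and> a h \<in> A" by simp
    then show ?thesis using False aA zX by (simp add: xstate_snoc)
  qed
qed

lemma feasible_cont:
  assumes fe: "feasible Ptr beta A zeta p g gbar x0 s0 a"
  shows "feasible Ptr beta A zeta p g gbar (zeta x0 (a [s0]) s0) s' (\<lambda>h. a (s0 # h))"
  unfolding feasible_def
proof (intro conjI allI impI)
  fix h assume h: "h \<noteq> [] \<and> hd h = s'"
  then have "a (s0 # h) \<in> Atil A p (xstate zeta a x0 (s0 # h)) (last (s0 # h))"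
    using fe unfolding feasible_def by (metis list.distinct(1) list.sel(1))
  then show "a (s0 # h) \<in> Atil A p (xstate zeta (\<lambda>h. a (s0 # h)) (zeta x0 (a [s0]) s0) h) (last h)"
    using h by (simp add: xstate_shift)
next
  fix h i assume h: "h \<noteq> [] \<and> hd h = s'"
  then have "gbar i \<le> disc_val Ptr beta (s0 # h) (\<lambda>h'. g i (xstate zeta a x0 h') (a h') (last h'))"
    using fe unfolding feasible_def by (metis list.distinct(1) list.sel(1))
  also have "\<dots> = disc_val Ptr beta h (\<lambda>h'. g i (xstate zeta a x0 (s0 # h')) (a (s0 # h')) (last (s0 # h')))"
    using h by (simp add: disc_val_shift)
  also have "\<dots> = disc_val Ptr beta h (\<lambda>h'. g i (xstate zeta (\<lambda>h. a (s0 # h)) (zeta x0 (a [s0]) s0) h') (a (s0 # h')) (last h'))"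
    using h by (intro disc_val_cong) (simp add: xstate_shift)
  finally show "gbar i \<le> disc_val Ptr beta h (\<lambda>h'. g i (xstate zeta (\<lambda>h. a (s0 # h)) (zeta x0 (a [s0]) s0) h') (a (s0 # h')) (last h'))" .
qed


context probs begin

lemma plan_fbound:
  assumes fe: "feasible Ptr beta A zeta p g gbar x0 s0 a" and x0: "x0 \<in> X"
    and zX: "\<And>x a s. x \<in> X \<Longrightarrow> a \<in> A \<Longrightarrow> zeta x a s \<in> X"
    and fb: "\<And>x a s. x \<in> X \<Longrightarrow> a \<in> A \<Longrightarrow> \<bar>f x a s\<bar> \<le> C"
  shows "\<bar>(\<lambda>h. f (xstate zeta a x0 h) (a h) (last h)) ([s0] @ c)\<bar> \<le> C"
  using feasible_in[OF fe x0 zX, of "[s0] @ c"] fb by simp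

lemma plan_bound:
  assumes fe: "feasible Ptr beta A zeta p g gbar x0 s0 a" and x0: "x0 \<in> X"
    and zX: "\<And>x a s. x \<in> X \<Longrightarrow> a \<in> A \<Longrightarrow> zeta x a s \<in> X"
    and fb: "\<And>x a s. x \<in> X \<Longrightarrow> a \<in> A \<Longrightarrow> \<bar>f x a s\<bar> \<le> C"
  shows "\<bar>plan_val Ptr beta zeta f x0 s0 a\<bar> \<le> C / (1 - beta)"
  unfolding plan_val_def by (rule disc_bound) (use feasible_in[OF fe x0 zX] fb in auto)

lemma plan_decomp:
  assumes fe: "feasible Ptr beta A zeta p g gbar x0 s0 a" and x0: "x0 \<in> X"
    and zX: "\<And>x a s. x \<in> X \<Longrightarrow> a \<in> A \<Longrightarrow> zeta x a s \<in> X"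
    and fb: "\<And>x a s. x \<in> X \<Longrightarrow> a \<in> A \<Longrightarrow> \<bar>f x a s\<bar> \<le> C"
  shows "plan_val Ptr beta zeta f x0 s0 a = f x0 (a [s0]) s0 +
     beta * (\<Sum>s'\<in>UNIV. Ptr s0 s' * plan_val Ptr beta zeta f (zeta x0 (a [s0]) s0) s' (\<lambda>h. a (s0 # h)))"
proof -
  have "plan_val Ptr beta zeta f x0 s0 a = f x0 (a [s0]) s0 +
     beta * (\<Sum>s'\<in>UNIV. Ptr s0 s' * disc_val Ptr beta ([s0] @ [s']) (\<lambda>h. f (xstate zeta a x0 h) (a h) (last h)))"
    unfolding plan_val_def by (subst disc_decomp[of "\<lambda>h. f (xstate zeta a x0 h) (a h) (last h)" "[s0]" C]) (use feasible_in[OF fe x0 zX] fb in auto)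
  also have "\<dots> = f x0 (a [s0]) s0 +
     beta * (\<Sum>s'\<in>UNIV. Ptr s0 s' * plan_val Ptr beta zeta f (zeta x0 (a [s0]) s0) s' (\<lambda>h. a (s0 # h)))"
  proof -
    have "disc_val Ptr beta ([s0] @ [s']) (\<lambda>h. f (xstate zeta a x0 h) (a h) (last h))
       = plan_val Ptr beta zeta f (zeta x0 (a [s0]) s0) s' (\<lambda>h. a (s0 # h))" for s'
    proof -
      have "disc_val Ptr beta ([s0] @ [s']) (\<lambda>h. f (xstate zeta a x0 h) (a h) (last h))
        = disc_val Ptr beta [s'] (\<lambda>h. f (xstate zeta a x0 (s0 # h)) (a (s0 # h)) (last (s0 # h)))"
        using disc_val_shift[of "[s']" Ptr beta s0] by simp
      also have "\<dots> = plan_val Ptr beta zeta f (zeta x0 (a [s0]) s0) s' (\<lambda>h. a (s0 # h))"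
        unfolding plan_val_def by (intro disc_val_cong) (simp add: xstate_shift)
      finally show ?thesis .
    qed
    then show ?thesis by simp
  qed
  finally show ?thesis .
qed

end

lemma sum_lin: "summable (\<lambda>k::nat. (1/2::real) ^ Suc k * (a + b * real (Suc k)))"
proof -
  have "summable (\<lambda>n. diffs (\<lambda>_. 1::real) n * (1/2) ^ n)"
    by (rule termdiff_converges[of _ 1]) (auto intro!: summable_geometric)
  then have s1: "summable (\<lambda>n. real (Suc n) * (1/2::real) ^ n)" by (simp add: diffs_def)
  have s2: "summable (\<lambda>n. (1/2::real) ^ n)" by (rule summable_geometric) simp
  have "summable (\<lambda>n. (a/2) * (1/2::real) ^ n + (b/2) * (real (Suc n) * (1/2::real) ^ n))"
    by (intro summable_add summable_mult s1 s2)
  moreover have "(\<lambda>k::nat. (1/2::real) ^ Suc k * (a + b * real (Suc k))) = (\<lambda>n. (a/2) * (1/2::real) ^ n + (b/2) * (real (Suc n) * (1/2::real) ^ n))"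
    by (simp add: fun_eq_iff field_simps)
  ultimately show ?thesis by simp
qed
lemma Bk_cbox: "Bk k = cbox (0::real^'i) (\<chi> i. k)"
  by (auto simp: Bk_def mem_box_cart)
lemma Bk_sets: "Bk k \<in> sets lebesgue"
  unfolding Bk_cbox by (rule fmeasurableD) (rule lmeasurable_cbox)
lemma Bk_pos: assumes "k > 0" shows "emeasure lebesgue (Bk k :: (real^'i) set) \<noteq> 0"
proof -
  have "emeasure lebesgue (Bk k :: (real^'i) set) = emeasure lborel (cbox (0::real^'i) (\<chi> i. k))"
    unfolding Bk_cbox by simp
  also have "\<dots> = ennreal (prod ((\<bullet>) ((\<chi> i. k) - (0::real^'i))) Basis)"
    by (rule emeasure_lborel_cbox) (use assms in \<open>auto simp: Basis_vec_def inner_axis\<close>)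
  also have "0 < prod ((\<bullet>) ((\<chi> i. k) - (0::real^'i))) Basis"
    by (rule prod_pos) (use assms in \<open>auto simp: Basis_vec_def inner_axis\<close>)
  then have "ennreal (prod ((\<bullet>) ((\<chi> i. k) - (0::real^'i))) Basis) \<noteq> 0" by (metis ennreal_eq_0_iff not_le)
  finally show ?thesis .
qed

lemma Linf_bound:
  fixes f :: "real^'i \<Rightarrow> real"
  assumes K: "K \<in> sets lebesgue" "emeasure lebesgue K \<noteq> 0"
    and c: "continuous_on K f" and b: "\<And>x. x \<in> K \<Longrightarrow> \<bar>f x\<bar> \<le> C"
  shows "0 \<le> Linf_norm K f \<and> Linf_norm K f \<le> ereal C"
proof -
  have m: "(\<lambda>x. ereal \<bar>f x\<bar>) \<in> borel_measurable (restrict_space lebesgue K)"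
    by (intro borel_measurable_ereal borel_measurable_abs continuous_imp_measurable_on_sets_lebesgue c K)
  have sp: "space (restrict_space lebesgue K) = K" by simp
  have "Linf_norm K f \<le> ereal C"
    unfolding Linf_norm_def
    by (rule esssup_I[OF m]) (rule AE_I2, use b in \<open>auto simp: sp\<close>)
  moreover have "esssup (restrict_space lebesgue K) (\<lambda>x. 0::ereal) = 0"
    by (rule esssup_const) (use K in \<open>simp add: emeasure_restrict_space del: emeasure_completion\<close>)
  then have "0 \<le> Linf_norm K f"
    unfolding Linf_norm_def by (metis esssup_mono[of "\<lambda>x. 0::ereal"] abs_ge_zero ereal_less_eq(5) borel_measurable_const)
  ultimately show ?thesis by simp
qed

lemma supnorm_ge:
  assumes "\<exists>C. \<forall>x\<in>X. \<forall>a\<in>A. \<forall>s. \<bar>f x a s\<bar> \<le> C" "x \<in> X" "a \<in> A"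
  shows "\<bar>f x a s\<bar> \<le> supnorm X A f"
proof -
  obtain C where C: "\<forall>x\<in>X. \<forall>a\<in>A. \<forall>s. \<bar>f x a s\<bar> \<le> C" using assms(1) by blast
  have "bdd_above ((\<lambda>z. \<bar>f (fst z) (fst (snd z)) (snd (snd z))\<bar>) ` (X \<times> A \<times> UNIV))"
    using C by (intro bdd_aboveI2[where M=C]) auto
  from cSUP_upper[OF _ this, of "(x, a, s)"] show ?thesis
    using assms unfolding supnorm_def by simp
qed

lemma nonneg_iff: "\<gamma> \<in> nonneg \<longleftrightarrow> (\<forall>i. 0 \<le> \<gamma> $ i)"
  by (simp add: nonneg_def)

lemma nonneg_add: "\<gamma> \<in> nonneg \<Longrightarrow> l \<in> nonneg \<Longrightarrow> \<gamma> + l \<in> nonneg"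
  by (simp add: nonneg_def)

lemma nonneg_zero: "0 \<in> nonneg"
  by (simp add: nonneg_def)

lemma nonneg_comb: "\<gamma> \<in> nonneg \<Longrightarrow> l \<in> nonneg \<Longrightarrow> u \<ge> 0 \<Longrightarrow> v \<ge> 0 \<Longrightarrow> u *\<^sub>R \<gamma> + v *\<^sub>R l \<in> nonneg"
  by (simp add: nonneg_def)

lemma convex_nonneg: "convex nonneg"
  unfolding convex_def by (simp add: nonneg_comb)

locale bell = probs Ptr beta
  for Ptr :: "'s::finite \<Rightarrow> 's \<Rightarrow> real" and beta +
  fixes A :: "'a set" and X :: "'x set" and zeta :: "'x \<Rightarrow> 'a \<Rightarrow> 's \<Rightarrow> 'x"
    and p r :: "'x \<Rightarrow> 'a \<Rightarrow> 's \<Rightarrow> real" and g :: "'i::finite \<Rightarrow> 'x \<Rightarrow> 'a \<Rightarrow> 's \<Rightarrow> real"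
    and gbar :: "'i \<Rightarrow> real" and se :: "nat \<Rightarrow> 's" and xe :: "nat \<Rightarrow> 'x"
  assumes A_fin: "finite A"
    and zeta_X: "\<And>x a s. x \<in> X \<Longrightarrow> a \<in> A \<Longrightarrow> zeta x a s \<in> X"
    and r_bdd: "\<exists>C. \<forall>x\<in>X. \<forall>a\<in>A. \<forall>s. \<bar>r x a s\<bar> \<le> C"
    and g_bdd: "\<And>i. \<exists>C. \<forall>x\<in>X. \<forall>a\<in>A. \<forall>s. \<bar>g i x a s\<bar> \<le> C"
    and beta_pos: "0 < beta"
    and feas: "\<And>x s. x \<in> X \<Longrightarrow> \<exists>a. feasible Ptr beta A zeta p g gbar x s a"
    and xe_in: "\<And>j. j \<in> enum_index X \<Longrightarrow> xe j \<in> X"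
begin

abbreviation "L \<equiv> Lconst beta X A r g"
abbreviation "NN \<equiv> Nspace se xe X Ptr beta A zeta p r g gbar"
abbreviation "sr \<equiv> supnorm X A r"
abbreviation "sg i \<equiv> supnorm X A (g i)"
abbreviation "G \<equiv> (\<Sum>i\<in>UNIV. sg i)"
abbreviation "BF F \<equiv> Bellman Ptr beta A zeta p r g gbar F"

definition Hf where "Hf F \<gamma> l x s a = r x a s + (\<Sum>i\<in>UNIV. \<gamma> $ i * g i x a s + l $ i * (g i x a s - gbar i))
   + beta * (\<Sum>s'\<in>UNIV. Ptr s s' * F (\<gamma> + l) (zeta x a s) s')"

definition Sf where "Sf F \<gamma> l x s = (SUP a\<in>Atil A p x s. Hf F \<gamma> l x s a)"

lemma Bell_eq: "BF F \<gamma> x s = (INF l\<in>nonneg. Sf F \<gamma> l x s)"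
  by (simp add: Bellman_def Sf_def Hf_def)

lemma r_le: "x \<in> X \<Longrightarrow> a \<in> A \<Longrightarrow> \<bar>r x a s\<bar> \<le> sr"
  by (rule supnorm_ge[OF r_bdd])

lemma g_le: "x \<in> X \<Longrightarrow> a \<in> A \<Longrightarrow> \<bar>g i x a s\<bar> \<le> sg i"
  by (rule supnorm_ge[OF g_bdd])

lemma sg_le_G: "x \<in> X \<Longrightarrow> a \<in> A \<Longrightarrow> sg i \<le> G"
proof -
  assume "x \<in> X" "a \<in> A"
  then have "\<And>j. 0 \<le> sg j" using g_le[of x a] by (meson abs_ge_zero order_trans)
  then show "sg i \<le> G" by (intro member_le_sum) auto
qed

lemma norms_nonneg: "x \<in> X \<Longrightarrow> a \<in> A \<Longrightarrow> 0 \<le> sr \<and> 0 \<le> G \<and> 0 \<le> L"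
proof -
  assume xa: "x \<in> X" "a \<in> A"
  then have "0 \<le> sr" using r_le[of x a] by (meson abs_ge_zero order_trans)
  moreover have "\<And>j. 0 \<le> sg j" using g_le[OF xa] by (meson abs_ge_zero order_trans)
  then have "0 \<le> G" by (simp add: sum_nonneg)
  ultimately show ?thesis using beta1 by (simp add: Lconst_def)
qed

lemma L_eq: "(1 - beta) * L = sr + G"
  using beta1 by (simp add: Lconst_def)

lemma Atil_fin: "finite (Atil A p x s)"
  using A_fin by (simp add: Atil_def)

lemma Atil_sub: "Atil A p x s \<subseteq> A"
  by (auto simp: Atil_def)

lemma feas_a0: "feasible Ptr beta A zeta p g gbar x s a \<Longrightarrow> a [s] \<in> Atil A p x s"
  unfolding feasible_def by (metis list.distinct(1) list.sel(1) xstate_single last_ConsL)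

lemma Atil_ne: "x \<in> X \<Longrightarrow> Atil A p x s \<noteq> {}"
  using feas feas_a0 by blast

lemma Nspace_D0:
  assumes "F \<in> NN" "x \<in> X"
  shows "convex_on nonneg (\<lambda>\<gamma>. F \<gamma> x s) \<and>
       (\<forall>\<gamma>1\<in>nonneg. \<forall>\<gamma>2\<in>nonneg. \<bar>F \<gamma>1 x s - F \<gamma>2 x s\<bar>
            \<le> L * (\<Sum>i\<in>UNIV. \<bar>\<gamma>1 $ i - \<gamma>2 $ i\<bar>)) \<and>
       (\<forall>\<gamma>\<in>nonneg. \<forall>a. feasible Ptr beta A zeta p g gbar x s a \<longrightarrow>
            F \<gamma> x s \<ge> plan_val Ptr beta zeta r x s a
                      + (\<Sum>i\<in>UNIV. \<gamma> $ i * plan_val Ptr beta zeta (g i) x s a)) \<and>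
       (\<forall>\<gamma>\<in>nonneg. F \<gamma> x s \<le> (1 + (\<Sum>i\<in>UNIV. \<gamma> $ i)) * L)"
proof -
  have "\<forall>x\<in>X. \<forall>s. convex_on nonneg (\<lambda>\<gamma>. F \<gamma> x s) \<and>
       (\<forall>\<gamma>1\<in>nonneg. \<forall>\<gamma>2\<in>nonneg. \<bar>F \<gamma>1 x s - F \<gamma>2 x s\<bar>
            \<le> L * (\<Sum>i\<in>UNIV. \<bar>\<gamma>1 $ i - \<gamma>2 $ i\<bar>)) \<and>
       (\<forall>\<gamma>\<in>nonneg. \<forall>a. feasible Ptr beta A zeta p g gbar x s a \<longrightarrow>
            F \<gamma> x s \<ge> plan_val Ptr beta zeta r x s a
                      + (\<Sum>i\<in>UNIV. \<gamma> $ i * plan_val Ptr beta zeta (g i) x s a)) \<and>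
       (\<forall>\<gamma>\<in>nonneg. F \<gamma> x s \<le> (1 + (\<Sum>i\<in>UNIV. \<gamma> $ i)) * L)"
    by (rule conjunct2[OF assms(1)[unfolded Nspace_def mem_Collect_eq]])
  from bspec[OF this assms(2)] show ?thesis by (rule spec)
qed

lemma Nspace_D1: "F \<in> NN \<Longrightarrow> x \<in> X \<Longrightarrow> convex_on nonneg (\<lambda>\<gamma>. F \<gamma> x s)"
  by (rule Nspace_D0[THEN conjunct1])

lemma Nspace_D2: "F \<in> NN \<Longrightarrow> x \<in> X \<Longrightarrow> \<gamma>1 \<in> nonneg \<Longrightarrow> \<gamma>2 \<in> nonneg \<Longrightarrow>
   \<bar>F \<gamma>1 x s - F \<gamma>2 x s\<bar> \<le> L * (\<Sum>i\<in>UNIV. \<bar>\<gamma>1 $ i - \<gamma>2 $ i\<bar>)"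
  by (rule Nspace_D0[THEN conjunct2, THEN conjunct1, rule_format])

lemma Nspace_D3: "F \<in> NN \<Longrightarrow> x \<in> X \<Longrightarrow> \<gamma> \<in> nonneg \<Longrightarrow> feasible Ptr beta A zeta p g gbar x s a \<Longrightarrow>
   F \<gamma> x s \<ge> plan_val Ptr beta zeta r x s a + (\<Sum>i\<in>UNIV. \<gamma> $ i * plan_val Ptr beta zeta (g i) x s a)"
  by (rule Nspace_D0[THEN conjunct2, THEN conjunct2, THEN conjunct1, rule_format])

lemma Nspace_D4: "F \<in> NN \<Longrightarrow> x \<in> X \<Longrightarrow> \<gamma> \<in> nonneg \<Longrightarrow> F \<gamma> x s \<le> (1 + (\<Sum>i\<in>UNIV. \<gamma> $ i)) * L"
  by (rule Nspace_D0[THEN conjunct2, THEN conjunct2, THEN conjunct2, rule_format])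

lemma H_le_S: "x \<in> X \<Longrightarrow> a \<in> Atil A p x s \<Longrightarrow> Hf F \<gamma> l x s a \<le> Sf F \<gamma> l x s"
  unfolding Sf_def by (rule cSUP_upper) (auto intro!: bdd_above_finite Atil_fin)

lemma S_le: "x \<in> X \<Longrightarrow> (\<And>a. a \<in> Atil A p x s \<Longrightarrow> Hf F \<gamma> l x s a \<le> c) \<Longrightarrow> Sf F \<gamma> l x s \<le> c"
  unfolding Sf_def by (rule cSUP_least) (auto simp: Atil_ne)

lemma S_lb:
  assumes F: "F \<in> NN" and x: "x \<in> X" and gl: "\<gamma> \<in> nonneg" "l \<in> nonneg"
    and fe: "feasible Ptr beta A zeta p g gbar x s a"
  shows "plan_val Ptr beta zeta r x s a + (\<Sum>i\<in>UNIV. \<gamma> $ i * plan_val Ptr beta zeta (g i) x s a) \<le> Sf F \<gamma> l x s"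
proof -
  define a0 where "a0 = a [s]"
  have a0: "a0 \<in> Atil A p x s" unfolding a0_def by (rule feas_a0[OF fe])
  then have a0A: "a0 \<in> A" using Atil_sub by blast
  define x1 where "x1 = zeta x a0 s"
  have x1: "x1 \<in> X" unfolding x1_def using zeta_X[OF x a0A] .
  define a' where "a' = (\<lambda>h. a (s # h))"
  have fe': "feasible Ptr beta A zeta p g gbar x1 s' a'" for s'
    unfolding x1_def a'_def a0_def by (rule feasible_cont[OF fe])
  define V0 where "V0 s' = plan_val Ptr beta zeta r x1 s' a'" for s'
  define V where "V i s' = plan_val Ptr beta zeta (g i) x1 s' a'" for i s'
  define pr where "pr = plan_val Ptr beta zeta r x s a"
  define pg where "pg i = plan_val Ptr beta zeta (g i) x s a" for i
  have dr: "pr = r x a0 s + beta * (\<Sum>s'\<in>UNIV. Ptr s s' * V0 s')"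
    unfolding pr_def V0_def x1_def a'_def a0_def
    by (rule plan_decomp[OF fe x zeta_X r_le])
  have dg: "pg i = g i x a0 s + beta * (\<Sum>s'\<in>UNIV. Ptr s s' * V i s')" for i
    unfolding pg_def V_def x1_def a'_def a0_def
    by (rule plan_decomp[OF fe x zeta_X g_le])
  have gfe: "gbar i \<le> pg i" for i
    using fe unfolding feasible_def pg_def plan_val_def by auto
  have Fge: "V0 s' + (\<Sum>i\<in>UNIV. (\<gamma> + l) $ i * V i s') \<le> F (\<gamma> + l) x1 s'" for s'
    unfolding V0_def V_def by (rule Nspace_D3[OF F x1 nonneg_add[OF gl] fe'])
  have "pr + (\<Sum>i\<in>UNIV. \<gamma> $ i * pg i) \<le> pr + (\<Sum>i\<in>UNIV. \<gamma> $ i * pg i + l $ i * (pg i - gbar i))"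
    using gl gfe by (auto simp: sum.distrib nonneg_iff intro!: sum_nonneg)
  also have "\<dots> = r x a0 s + (\<Sum>i\<in>UNIV. \<gamma> $ i * g i x a0 s + l $ i * (g i x a0 s - gbar i))
     + (beta * (\<Sum>s'\<in>UNIV. Ptr s s' * V0 s') + (\<Sum>i\<in>UNIV. (\<gamma> + l) $ i * (beta * (\<Sum>s'\<in>UNIV. Ptr s s' * V i s'))))"
  proof -
    have e: "\<gamma> $ i * pg i + l $ i * (pg i - gbar i) = (\<gamma> $ i * g i x a0 s + l $ i * (g i x a0 s - gbar i))
       + (\<gamma> + l) $ i * (beta * (\<Sum>s'\<in>UNIV. Ptr s s' * V i s'))" for i
      by (simp add: dg algebra_simps)
    show ?thesis by (simp only: e sum.distrib dr)
  qed
  also have "(\<Sum>i\<in>UNIV. (\<gamma> + l) $ i * (beta * (\<Sum>s'\<in>UNIV. Ptr s s' * V i s')))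
      = beta * (\<Sum>s'\<in>UNIV. Ptr s s' * (\<Sum>i\<in>UNIV. (\<gamma> + l) $ i * V i s'))"
  proof -
    have "(\<Sum>i\<in>UNIV. (\<gamma> + l) $ i * (beta * (\<Sum>s'\<in>UNIV. Ptr s s' * V i s')))
       = (\<Sum>i\<in>UNIV. \<Sum>s'\<in>UNIV. beta * (Ptr s s' * ((\<gamma> + l) $ i * V i s')))"
      by (simp add: sum_distrib_left mult_ac)
    also have "\<dots> = (\<Sum>s'\<in>UNIV. \<Sum>i\<in>UNIV. beta * (Ptr s s' * ((\<gamma> + l) $ i * V i s')))"
      by (rule sum.swap)
    also have "\<dots> = beta * (\<Sum>s'\<in>UNIV. Ptr s s' * (\<Sum>i\<in>UNIV. (\<gamma> + l) $ i * V i s'))"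
      by (simp add: sum_distrib_left)
    finally show ?thesis .
  qed
  also have "beta * (\<Sum>s'\<in>UNIV. Ptr s s' * V0 s') + beta * (\<Sum>s'\<in>UNIV. Ptr s s' * (\<Sum>i\<in>UNIV. (\<gamma> + l) $ i * V i s'))
      = beta * (\<Sum>s'\<in>UNIV. Ptr s s' * (V0 s' + (\<Sum>i\<in>UNIV. (\<gamma> + l) $ i * V i s')))"
    by (simp add: sum.distrib distrib_left)
  also have "\<dots> \<le> beta * (\<Sum>s'\<in>UNIV. Ptr s s' * F (\<gamma> + l) x1 s')"
    using beta0 P_nn Fge by (intro mult_left_mono sum_mono) auto
  also have "r x a0 s + (\<Sum>i\<in>UNIV. \<gamma> $ i * g i x a0 s + l $ i * (g i x a0 s - gbar i)) + \<dots> = Hf F \<gamma> l x s a0"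
    unfolding Hf_def x1_def ..
  also have "\<dots> \<le> Sf F \<gamma> l x s" by (rule H_le_S[OF x a0])
  finally show ?thesis unfolding pr_def pg_def by simp
qed

end
context bell begin

lemma nonneg_ne: "nonneg \<noteq> {}"
  using nonneg_zero by blast

lemma S_bdd:
  assumes F: "F \<in> NN" and x: "x \<in> X" and g: "\<gamma> \<in> nonneg"
  shows "bdd_below ((\<lambda>l. Sf F \<gamma> l x s) ` nonneg)"
proof -
  obtain a where fe: "feasible Ptr beta A zeta p g gbar x s a" using feas[OF x] by blast
  show ?thesis by (rule bdd_belowI2) (rule S_lb[OF F x g _ fe])
qed

lemma B_ge:
  assumes F: "F \<in> NN" and x: "x \<in> X" and g: "\<gamma> \<in> nonneg"
    and fe: "feasible Ptr beta A zeta p g gbar x s a"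
  shows "plan_val Ptr beta zeta r x s a + (\<Sum>i\<in>UNIV. \<gamma> $ i * plan_val Ptr beta zeta (g i) x s a) \<le> BF F \<gamma> x s"
  unfolding Bell_eq by (rule cINF_greatest[OF nonneg_ne]) (rule S_lb[OF F x g _ fe])

lemma B_le_S:
  assumes F: "F \<in> NN" and x: "x \<in> X" and g: "\<gamma> \<in> nonneg" and l: "l \<in> nonneg"
  shows "BF F \<gamma> x s \<le> Sf F \<gamma> l x s"
  unfolding Bell_eq by (rule cINF_lower[OF S_bdd[OF F x g] l])

lemma B_approx:
  assumes F: "F \<in> NN" and x: "x \<in> X" and g: "\<gamma> \<in> nonneg" and e: "0 < e"
  shows "\<exists>l\<in>nonneg. Sf F \<gamma> l x s < BF F \<gamma> x s + e"
proof -
  have "(INF l\<in>nonneg. Sf F \<gamma> l x s) < BF F \<gamma> x s + e" using e by (simp add: Bell_eq)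
  then show ?thesis using cINF_less_iff[OF nonneg_ne S_bdd[OF F x g]] by blast
qed

lemma B_upper:
  assumes F: "F \<in> NN" and x: "x \<in> X" and g: "\<gamma> \<in> nonneg"
  shows "BF F \<gamma> x s \<le> (1 + (\<Sum>i\<in>UNIV. \<gamma> $ i)) * L"
proof -
  define T where "T = (\<Sum>i\<in>UNIV. \<gamma> $ i)"
  have T0: "0 \<le> T" unfolding T_def using g by (simp add: nonneg_iff sum_nonneg)
  have "Sf F \<gamma> 0 x s \<le> (1 + T) * L"
  proof (rule S_le[OF x])
    fix a assume a: "a \<in> Atil A p x s"
    then have aA: "a \<in> A" using Atil_sub by blast
    have x': "zeta x a s \<in> X" using zeta_X[OF x aA] .
    have nn: "0 \<le> sr" "0 \<le> G" "0 \<le> L" using norms_nonneg[OF x aA] by auto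
    have h1: "r x a s \<le> sr" using r_le[OF x aA, of s] by simp
    have "(\<Sum>i\<in>UNIV. \<gamma> $ i * g i x a s + (0::real^'i) $ i * (g i x a s - gbar i)) = (\<Sum>i\<in>UNIV. \<gamma> $ i * g i x a s)"
      by simp
    also have "\<dots> \<le> (\<Sum>i\<in>UNIV. \<gamma> $ i * G)"
    proof (rule sum_mono)
      fix i
      have "g i x a s \<le> G" using g_le[OF x aA, of i s] sg_le_G[OF x aA, of i] by simp
      then show "\<gamma> $ i * g i x a s \<le> \<gamma> $ i * G" using g by (simp add: nonneg_iff mult_left_mono)
    qed
    also have "\<dots> = T * G" unfolding T_def by (simp add: sum_distrib_right)
    finally have h2: "(\<Sum>i\<in>UNIV. \<gamma> $ i * g i x a s + (0::real^'i) $ i * (g i x a s - gbar i)) \<le> T * G" .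
    have "(\<Sum>s'\<in>UNIV. Ptr s s' * F (\<gamma> + 0) (zeta x a s) s') \<le> (\<Sum>s'\<in>UNIV. Ptr s s' * ((1 + T) * L))"
      using Nspace_D4[OF F x' g] P_nn by (intro sum_mono mult_left_mono) (auto simp: T_def)
    also have "\<dots> = (1 + T) * L" by (simp add: sum_distrib_right[symmetric] P_sum)
    finally have h3': "(\<Sum>s'\<in>UNIV. Ptr s s' * F (\<gamma> + 0) (zeta x a s) s') \<le> (1 + T) * L" .
    have h3: "beta * (\<Sum>s'\<in>UNIV. Ptr s s' * F (\<gamma> + 0) (zeta x a s) s') \<le> beta * ((1 + T) * L)"
      by (rule mult_left_mono[OF h3' beta0])
    have "(1 + T) * L - beta * ((1 + T) * L) = (1 + T) * ((1 - beta) * L)"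
      by (simp add: algebra_simps)
    also have "\<dots> = (1 + T) * (sr + G)" using L_eq by simp
    finally have e: "(1 + T) * L - beta * ((1 + T) * L) = (1 + T) * (sr + G)" .
    have "0 \<le> T * sr" using T0 nn by simp
    moreover have "(1 + T) * (sr + G) = sr + G + T * sr + T * G" by (simp add: algebra_simps)
    ultimately have h4: "sr + T * G + beta * ((1 + T) * L) \<le> (1 + T) * L"
      using e nn by linarith
    show "Hf F \<gamma> 0 x s a \<le> (1 + T) * L"
      unfolding Hf_def using h1 h2 h3 h4 by linarith
  qed
  then show ?thesis unfolding T_def[symmetric]
    using B_le_S[OF F x g nonneg_zero, of s] by linarith
qed

lemma B_lower:
  assumes F: "F \<in> NN" and x: "x \<in> X" and g: "\<gamma> \<in> nonneg"
  shows "- ((1 + (\<Sum>i\<in>UNIV. \<gamma> $ i)) * L) \<le> BF F \<gamma> x s"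
proof -
  obtain a where fe: "feasible Ptr beta A zeta p g gbar x s a" using feas[OF x] by blast
  have aA: "a [s] \<in> A" using feas_a0[OF fe] Atil_sub by blast
  have nn: "0 \<le> sr" "0 \<le> G" "0 \<le> L" using norms_nonneg[OF x aA] by auto
  have b1: "sr / (1 - beta) \<le> L" using beta1 nn L_eq by (simp add: divide_simps mult.commute)
  have b2: "sg i / (1 - beta) \<le> L" for i
    using beta1 nn L_eq sg_le_G[OF x aA, of i] by (simp add: divide_simps mult.commute)
  have pr: "- L \<le> plan_val Ptr beta zeta r x s a"
    using plan_bound[where f=r and C=sr, OF fe x zeta_X r_le] b1 by (simp add: abs_le_iff)
  have pg: "- (\<gamma> $ i * L) \<le> \<gamma> $ i * plan_val Ptr beta zeta (g i) x s a" for i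
  proof -
    have pl: "- L \<le> plan_val Ptr beta zeta (g i) x s a"
      using plan_bound[where f="g i" and C="sg i", OF fe x zeta_X g_le] b2[of i] by (simp add: abs_le_iff)
    show ?thesis using mult_left_mono[OF pl, of "\<gamma> $ i"] g by (simp add: nonneg_iff)
  qed
  have "- ((1 + (\<Sum>i\<in>UNIV. \<gamma> $ i)) * L) = - L + (\<Sum>i\<in>UNIV. - (\<gamma> $ i * L))"
    by (simp add: algebra_simps sum_distrib_right sum_negf)
  also have "\<dots> \<le> plan_val Ptr beta zeta r x s a + (\<Sum>i\<in>UNIV. \<gamma> $ i * plan_val Ptr beta zeta (g i) x s a)"
    using pr pg by (intro add_mono sum_mono) auto
  also have "\<dots> \<le> BF F \<gamma> x s" by (rule B_ge[OF F x g fe])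
  finally show ?thesis .
qed

lemma B_abs:
  assumes F: "F \<in> NN" and x: "x \<in> X" and g: "\<gamma> \<in> nonneg"
  shows "\<bar>BF F \<gamma> x s\<bar> \<le> (1 + (\<Sum>i\<in>UNIV. \<gamma> $ i)) * L"
  using B_upper[OF assms, of s] B_lower[OF assms, of s] by (simp add: abs_le_iff)

end
context bell begin

lemma H_diff:
  assumes F: "F \<in> NN" and x: "x \<in> X" and a: "a \<in> Atil A p x s"
    and g1: "\<gamma>1 \<in> nonneg" and g2: "\<gamma>2 \<in> nonneg" and l: "l \<in> nonneg"
  shows "Hf F \<gamma>1 l x s a \<le> Hf F \<gamma>2 l x s a + L * (\<Sum>i\<in>UNIV. \<bar>\<gamma>1 $ i - \<gamma>2 $ i\<bar>)"
proof -
  define d where "d = (\<Sum>i\<in>UNIV. \<bar>\<gamma>1 $ i - \<gamma>2 $ i\<bar>)"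
  have d0: "0 \<le> d" unfolding d_def by (simp add: sum_nonneg)
  have aA: "a \<in> A" using a Atil_sub by blast
  have x': "zeta x a s \<in> X" using zeta_X[OF x aA] .
  have nn: "0 \<le> sr" "0 \<le> G" "0 \<le> L" using norms_nonneg[OF x aA] by auto
  have e0: "Hf F \<gamma>1 l x s a - Hf F \<gamma>2 l x s a =
      ((\<Sum>i\<in>UNIV. \<gamma>1 $ i * g i x a s + l $ i * (g i x a s - gbar i)) - (\<Sum>i\<in>UNIV. \<gamma>2 $ i * g i x a s + l $ i * (g i x a s - gbar i)))
      + beta * ((\<Sum>s'\<in>UNIV. Ptr s s' * F (\<gamma>1 + l) (zeta x a s) s') - (\<Sum>s'\<in>UNIV. Ptr s s' * F (\<gamma>2 + l) (zeta x a s) s'))"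
    unfolding Hf_def by (simp add: right_diff_distrib)
  have s1: "(\<Sum>i\<in>UNIV. \<gamma>1 $ i * g i x a s + l $ i * (g i x a s - gbar i)) - (\<Sum>i\<in>UNIV. \<gamma>2 $ i * g i x a s + l $ i * (g i x a s - gbar i))
     = (\<Sum>i\<in>UNIV. (\<gamma>1 $ i - \<gamma>2 $ i) * g i x a s)"
    by (simp add: sum_subtractf[symmetric] algebra_simps)
  have s2: "(\<Sum>s'\<in>UNIV. Ptr s s' * F (\<gamma>1 + l) (zeta x a s) s') - (\<Sum>s'\<in>UNIV. Ptr s s' * F (\<gamma>2 + l) (zeta x a s) s')
     = (\<Sum>s'\<in>UNIV. Ptr s s' * (F (\<gamma>1 + l) (zeta x a s) s' - F (\<gamma>2 + l) (zeta x a s) s'))"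
    by (simp add: sum_subtractf[symmetric] right_diff_distrib)
  have e: "Hf F \<gamma>1 l x s a - Hf F \<gamma>2 l x s a =
      (\<Sum>i\<in>UNIV. (\<gamma>1 $ i - \<gamma>2 $ i) * g i x a s)
      + beta * (\<Sum>s'\<in>UNIV. Ptr s s' * (F (\<gamma>1 + l) (zeta x a s) s' - F (\<gamma>2 + l) (zeta x a s) s'))"
    unfolding e0 s1 s2 ..
  have t1: "(\<Sum>i\<in>UNIV. (\<gamma>1 $ i - \<gamma>2 $ i) * g i x a s) \<le> d * G"
  proof -
    have "(\<Sum>i\<in>UNIV. (\<gamma>1 $ i - \<gamma>2 $ i) * g i x a s) \<le> (\<Sum>i\<in>UNIV. \<bar>\<gamma>1 $ i - \<gamma>2 $ i\<bar> * G)"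
    proof (rule sum_mono)
      fix i
      have "\<bar>g i x a s\<bar> \<le> G" using g_le[OF x aA, of i s] sg_le_G[OF x aA, of i] by simp
      then have "\<bar>\<gamma>1 $ i - \<gamma>2 $ i\<bar> * \<bar>g i x a s\<bar> \<le> \<bar>\<gamma>1 $ i - \<gamma>2 $ i\<bar> * G"
        by (simp add: mult_left_mono)
      moreover have "(\<gamma>1 $ i - \<gamma>2 $ i) * g i x a s \<le> \<bar>\<gamma>1 $ i - \<gamma>2 $ i\<bar> * \<bar>g i x a s\<bar>"
        by (metis abs_ge_self abs_mult)
      ultimately show "(\<gamma>1 $ i - \<gamma>2 $ i) * g i x a s \<le> \<bar>\<gamma>1 $ i - \<gamma>2 $ i\<bar> * G" by linarith
    qed
    also have "\<dots> = d * G" unfolding d_def by (simp add: sum_distrib_right)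
    finally show ?thesis .
  qed
  have t2: "(\<Sum>s'\<in>UNIV. Ptr s s' * (F (\<gamma>1 + l) (zeta x a s) s' - F (\<gamma>2 + l) (zeta x a s) s')) \<le> L * d"
  proof -
    have "(\<Sum>s'\<in>UNIV. Ptr s s' * (F (\<gamma>1 + l) (zeta x a s) s' - F (\<gamma>2 + l) (zeta x a s) s'))
        \<le> (\<Sum>s'\<in>UNIV. Ptr s s' * (L * d))"
    proof (rule sum_mono)
      fix s'
      have "\<bar>F (\<gamma>1 + l) (zeta x a s) s' - F (\<gamma>2 + l) (zeta x a s) s'\<bar> \<le> L * (\<Sum>i\<in>UNIV. \<bar>(\<gamma>1 + l) $ i - (\<gamma>2 + l) $ i\<bar>)"
        by (rule Nspace_D2[OF F x' nonneg_add[OF g1 l] nonneg_add[OF g2 l]])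
      then have "F (\<gamma>1 + l) (zeta x a s) s' - F (\<gamma>2 + l) (zeta x a s) s' \<le> L * d"
        unfolding d_def by simp
      then show "Ptr s s' * (F (\<gamma>1 + l) (zeta x a s) s' - F (\<gamma>2 + l) (zeta x a s) s') \<le> Ptr s s' * (L * d)"
        using P_nn by (simp add: mult_left_mono)
    qed
    also have "\<dots> = L * d" by (simp add: sum_distrib_right[symmetric] P_sum)
    finally show ?thesis .
  qed
  have t3: "beta * (\<Sum>s'\<in>UNIV. Ptr s s' * (F (\<gamma>1 + l) (zeta x a s) s' - F (\<gamma>2 + l) (zeta x a s) s')) \<le> beta * (L * d)"
    by (rule mult_left_mono[OF t2 beta0])
  have "G \<le> (1 - beta) * L" using L_eq nn by simp
  then have "d * G \<le> d * ((1 - beta) * L)" using d0 by (simp add: mult_left_mono)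
  then have t4: "d * G + beta * (L * d) \<le> L * d" by (simp add: algebra_simps)
  show ?thesis using e t1 t3 t4 unfolding d_def by linarith
qed

lemma B_diff:
  assumes F: "F \<in> NN" and x: "x \<in> X" and g1: "\<gamma>1 \<in> nonneg" and g2: "\<gamma>2 \<in> nonneg"
  shows "BF F \<gamma>1 x s \<le> BF F \<gamma>2 x s + L * (\<Sum>i\<in>UNIV. \<bar>\<gamma>1 $ i - \<gamma>2 $ i\<bar>)"
proof -
  define c where "c = L * (\<Sum>i\<in>UNIV. \<bar>\<gamma>1 $ i - \<gamma>2 $ i\<bar>)"
  have "BF F \<gamma>1 x s - c \<le> (INF l\<in>nonneg. Sf F \<gamma>2 l x s)"
  proof (rule cINF_greatest[OF nonneg_ne])
    fix l :: "real^'i" assume l: "l \<in> nonneg"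
    have "Sf F \<gamma>1 l x s \<le> Sf F \<gamma>2 l x s + c"
    proof (rule S_le[OF x])
      fix a assume a: "a \<in> Atil A p x s"
      show "Hf F \<gamma>1 l x s a \<le> Sf F \<gamma>2 l x s + c"
        using H_diff[OF F x a g1 g2 l] H_le_S[OF x a, of F \<gamma>2 l] unfolding c_def by linarith
    qed
    then show "BF F \<gamma>1 x s - c \<le> Sf F \<gamma>2 l x s" using B_le_S[OF F x g1 l, of s] by linarith
  qed
  then show ?thesis unfolding Bell_eq[of F \<gamma>2] c_def by linarith
qed

lemma B_lip:
  assumes F: "F \<in> NN" and x: "x \<in> X" and g1: "\<gamma>1 \<in> nonneg" and g2: "\<gamma>2 \<in> nonneg"
  shows "\<bar>BF F \<gamma>1 x s - BF F \<gamma>2 x s\<bar> \<le> L * (\<Sum>i\<in>UNIV. \<bar>\<gamma>1 $ i - \<gamma>2 $ i\<bar>)"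
proof -
  have "(\<Sum>i\<in>UNIV. \<bar>\<gamma>2 $ i - \<gamma>1 $ i\<bar>) = (\<Sum>i\<in>UNIV. \<bar>\<gamma>1 $ i - \<gamma>2 $ i\<bar>)"
    by (simp add: abs_minus_commute)
  then show ?thesis using B_diff[OF F x g1 g2, of s] B_diff[OF F x g2 g1, of s] by (simp add: abs_le_iff)
qed

lemma H_conv:
  assumes F: "F \<in> NN" and x: "x \<in> X" and a: "a \<in> Atil A p x s"
    and g1: "\<gamma>1 \<in> nonneg" and g2: "\<gamma>2 \<in> nonneg" and l1: "l1 \<in> nonneg" and l2: "l2 \<in> nonneg"
    and u: "0 \<le> u" and v: "0 \<le> v" and uv: "u + v = 1"
  shows "Hf F (u *\<^sub>R \<gamma>1 + v *\<^sub>R \<gamma>2) (u *\<^sub>R l1 + v *\<^sub>R l2) x s a \<le> u * Hf F \<gamma>1 l1 x s a + v * Hf F \<gamma>2 l2 x s a"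
proof -
  have aA: "a \<in> A" using a Atil_sub by blast
  have x': "zeta x a s \<in> X" using zeta_X[OF x aA] .
  have comb: "(u *\<^sub>R \<gamma>1 + v *\<^sub>R \<gamma>2) + (u *\<^sub>R l1 + v *\<^sub>R l2) = u *\<^sub>R (\<gamma>1 + l1) + v *\<^sub>R (\<gamma>2 + l2)"
    by (simp add: algebra_simps)
  have Fc: "F ((u *\<^sub>R \<gamma>1 + v *\<^sub>R \<gamma>2) + (u *\<^sub>R l1 + v *\<^sub>R l2)) (zeta x a s) s'
      \<le> u * F (\<gamma>1 + l1) (zeta x a s) s' + v * F (\<gamma>2 + l2) (zeta x a s) s'" for s'
    using Nspace_D1[OF F x', of s'] nonneg_add[OF g1 l1] nonneg_add[OF g2 l2] u v uv
    unfolding comb convex_on_def by blast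
  have P: "(\<Sum>s'\<in>UNIV. Ptr s s' * F ((u *\<^sub>R \<gamma>1 + v *\<^sub>R \<gamma>2) + (u *\<^sub>R l1 + v *\<^sub>R l2)) (zeta x a s) s')
      \<le> u * (\<Sum>s'\<in>UNIV. Ptr s s' * F (\<gamma>1 + l1) (zeta x a s) s') + v * (\<Sum>s'\<in>UNIV. Ptr s s' * F (\<gamma>2 + l2) (zeta x a s) s')"
  proof -
    have "(\<Sum>s'\<in>UNIV. Ptr s s' * F ((u *\<^sub>R \<gamma>1 + v *\<^sub>R \<gamma>2) + (u *\<^sub>R l1 + v *\<^sub>R l2)) (zeta x a s) s')
      \<le> (\<Sum>s'\<in>UNIV. Ptr s s' * (u * F (\<gamma>1 + l1) (zeta x a s) s' + v * F (\<gamma>2 + l2) (zeta x a s) s'))"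
      using Fc P_nn by (intro sum_mono mult_left_mono) auto
    also have "\<dots> = u * (\<Sum>s'\<in>UNIV. Ptr s s' * F (\<gamma>1 + l1) (zeta x a s) s') + v * (\<Sum>s'\<in>UNIV. Ptr s s' * F (\<gamma>2 + l2) (zeta x a s) s')"
      by (simp add: sum.distrib sum_distrib_left algebra_simps)
    finally show ?thesis .
  qed
  have lin: "r x a s + (\<Sum>i\<in>UNIV. (u *\<^sub>R \<gamma>1 + v *\<^sub>R \<gamma>2) $ i * g i x a s + (u *\<^sub>R l1 + v *\<^sub>R l2) $ i * (g i x a s - gbar i))
     = u * (r x a s + (\<Sum>i\<in>UNIV. \<gamma>1 $ i * g i x a s + l1 $ i * (g i x a s - gbar i)))
     + v * (r x a s + (\<Sum>i\<in>UNIV. \<gamma>2 $ i * g i x a s + l2 $ i * (g i x a s - gbar i)))"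
  proof -
    have "r x a s = u * r x a s + v * r x a s" using uv by (metis distrib_right mult_1)
    moreover have "(\<Sum>i\<in>UNIV. (u *\<^sub>R \<gamma>1 + v *\<^sub>R \<gamma>2) $ i * g i x a s + (u *\<^sub>R l1 + v *\<^sub>R l2) $ i * (g i x a s - gbar i))
      = u * (\<Sum>i\<in>UNIV. \<gamma>1 $ i * g i x a s + l1 $ i * (g i x a s - gbar i))
      + v * (\<Sum>i\<in>UNIV. \<gamma>2 $ i * g i x a s + l2 $ i * (g i x a s - gbar i))"
    proof -
      have "u * (\<Sum>i\<in>UNIV. \<gamma>1 $ i * g i x a s + l1 $ i * (g i x a s - gbar i))
        + v * (\<Sum>i\<in>UNIV. \<gamma>2 $ i * g i x a s + l2 $ i * (g i x a s - gbar i))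
        = (\<Sum>i\<in>UNIV. u * (\<gamma>1 $ i * g i x a s + l1 $ i * (g i x a s - gbar i))
            + v * (\<gamma>2 $ i * g i x a s + l2 $ i * (g i x a s - gbar i)))"
        by (simp only: sum.distrib[symmetric] sum_distrib_left)
      also have "\<dots> = (\<Sum>i\<in>UNIV. (u *\<^sub>R \<gamma>1 + v *\<^sub>R \<gamma>2) $ i * g i x a s + (u *\<^sub>R l1 + v *\<^sub>R l2) $ i * (g i x a s - gbar i))"
        by (rule sum.cong) (simp_all add: algebra_simps)
      finally show ?thesis by simp
    qed
    ultimately show ?thesis by (simp add: algebra_simps)
  qed
  have "Hf F (u *\<^sub>R \<gamma>1 + v *\<^sub>R \<gamma>2) (u *\<^sub>R l1 + v *\<^sub>R l2) x s a
     \<le> u * (r x a s + (\<Sum>i\<in>UNIV. \<gamma>1 $ i * g i x a s + l1 $ i * (g i x a s - gbar i)))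
     + v * (r x a s + (\<Sum>i\<in>UNIV. \<gamma>2 $ i * g i x a s + l2 $ i * (g i x a s - gbar i)))
     + beta * (u * (\<Sum>s'\<in>UNIV. Ptr s s' * F (\<gamma>1 + l1) (zeta x a s) s') + v * (\<Sum>s'\<in>UNIV. Ptr s s' * F (\<gamma>2 + l2) (zeta x a s) s'))"
    unfolding Hf_def lin using mult_left_mono[OF P beta0] by linarith
  also have "\<dots> = u * Hf F \<gamma>1 l1 x s a + v * Hf F \<gamma>2 l2 x s a"
    unfolding Hf_def by (simp add: algebra_simps)
  finally show ?thesis .
qed

lemma B_conv:
  assumes F: "F \<in> NN" and x: "x \<in> X"
    and g1: "\<gamma>1 \<in> nonneg" and g2: "\<gamma>2 \<in> nonneg"
    and u: "0 \<le> u" and v: "0 \<le> v" and uv: "u + v = 1"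
  shows "BF F (u *\<^sub>R \<gamma>1 + v *\<^sub>R \<gamma>2) x s \<le> u * BF F \<gamma>1 x s + v * BF F \<gamma>2 x s"
proof (rule field_le_epsilon)
  fix e :: real assume e: "0 < e"
  obtain l1 where l1: "l1 \<in> nonneg" "Sf F \<gamma>1 l1 x s < BF F \<gamma>1 x s + e" using B_approx[OF F x g1 e] by blast
  obtain l2 where l2: "l2 \<in> nonneg" "Sf F \<gamma>2 l2 x s < BF F \<gamma>2 x s + e" using B_approx[OF F x g2 e] by blast
  have gu: "u *\<^sub>R \<gamma>1 + v *\<^sub>R \<gamma>2 \<in> nonneg" by (rule nonneg_comb[OF g1 g2 u v])
  have lu: "u *\<^sub>R l1 + v *\<^sub>R l2 \<in> nonneg" by (rule nonneg_comb[OF l1(1) l2(1) u v])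
  have "Sf F (u *\<^sub>R \<gamma>1 + v *\<^sub>R \<gamma>2) (u *\<^sub>R l1 + v *\<^sub>R l2) x s \<le> u * Sf F \<gamma>1 l1 x s + v * Sf F \<gamma>2 l2 x s"
  proof (rule S_le[OF x])
    fix a assume a: "a \<in> Atil A p x s"
    have "u * Hf F \<gamma>1 l1 x s a \<le> u * Sf F \<gamma>1 l1 x s" by (rule mult_left_mono[OF H_le_S[OF x a] u])
    moreover have "v * Hf F \<gamma>2 l2 x s a \<le> v * Sf F \<gamma>2 l2 x s" by (rule mult_left_mono[OF H_le_S[OF x a] v])
    ultimately show "Hf F (u *\<^sub>R \<gamma>1 + v *\<^sub>R \<gamma>2) (u *\<^sub>R l1 + v *\<^sub>R l2) x s a \<le> u * Sf F \<gamma>1 l1 x s + v * Sf F \<gamma>2 l2 x s"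
      using H_conv[OF F x a g1 g2 l1(1) l2(1) u v uv] by linarith
  qed
  moreover have "u * Sf F \<gamma>1 l1 x s \<le> u * (BF F \<gamma>1 x s + e)" using l1(2) u by (simp add: mult_left_mono)
  moreover have "v * Sf F \<gamma>2 l2 x s \<le> v * (BF F \<gamma>2 x s + e)" using l2(2) v by (simp add: mult_left_mono)
  moreover have "u * (BF F \<gamma>1 x s + e) + v * (BF F \<gamma>2 x s + e) = u * BF F \<gamma>1 x s + v * BF F \<gamma>2 x s + e"
  proof -
    have "u * (BF F \<gamma>1 x s + e) + v * (BF F \<gamma>2 x s + e) = u * BF F \<gamma>1 x s + v * BF F \<gamma>2 x s + (u + v) * e"
      by (simp add: algebra_simps)
    then show ?thesis using uv by simp
  qed
  ultimately show "BF F (u *\<^sub>R \<gamma>1 + v *\<^sub>R \<gamma>2) x s \<le> u * BF F \<gamma>1 x s + v * BF F \<gamma>2 x s + e"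
    using B_le_S[OF F x gu lu, of s] by linarith
qed

lemma B_convex_on:
  assumes F: "F \<in> NN" and x: "x \<in> X"
  shows "convex_on nonneg (\<lambda>\<gamma>. BF F \<gamma> x s)"
  unfolding convex_on_def
proof (intro conjI convex_nonneg ballI allI impI)
  fix \<gamma>1 \<gamma>2 :: "real^'i" and u v :: real
  assume "\<gamma>1 \<in> nonneg" "\<gamma>2 \<in> nonneg" "0 \<le> u" "0 \<le> v" "u + v = 1"
  then show "BF F (u *\<^sub>R \<gamma>1 + v *\<^sub>R \<gamma>2) x s \<le> u * BF F \<gamma>1 x s + v * BF F \<gamma>2 x s"
    by (rule B_conv[OF F x])
qed

end
context bell begin

lemma B_cont:
  assumes F: "F \<in> NN" and x: "x \<in> X"
  shows "continuous_on nonneg (\<lambda>\<gamma>. BF F \<gamma> x s)"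
proof -
  obtain a where a: "a \<in> Atil A p x s" using Atil_ne[OF x] by blast
  then have aA: "a \<in> A" using Atil_sub by blast
  have L0: "0 \<le> L" using norms_nonneg[OF x aA] by simp
  have "(L * real CARD('i))-lipschitz_on nonneg (\<lambda>\<gamma>. BF F \<gamma> x s)"
  proof (rule lipschitz_onI)
    fix \<gamma>1 \<gamma>2 :: "real^'i" assume g: "\<gamma>1 \<in> nonneg" "\<gamma>2 \<in> nonneg"
    have "(\<Sum>i\<in>UNIV. \<bar>\<gamma>1 $ i - \<gamma>2 $ i\<bar>) \<le> (\<Sum>i\<in>(UNIV::'i set). dist \<gamma>1 \<gamma>2)"
    proof (rule sum_mono)
      fix i
      show "\<bar>\<gamma>1 $ i - \<gamma>2 $ i\<bar> \<le> dist \<gamma>1 \<gamma>2"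
        using component_le_norm_cart[of "\<gamma>1 - \<gamma>2" i] by (simp add: dist_norm)
    qed
    also have "\<dots> = real CARD('i) * dist \<gamma>1 \<gamma>2" by simp
    finally have "L * (\<Sum>i\<in>UNIV. \<bar>\<gamma>1 $ i - \<gamma>2 $ i\<bar>) \<le> L * (real CARD('i) * dist \<gamma>1 \<gamma>2)"
      using L0 by (rule mult_left_mono)
    then show "dist (BF F \<gamma>1 x s) (BF F \<gamma>2 x s) \<le> L * real CARD('i) * dist \<gamma>1 \<gamma>2"
      using B_lip[OF F x g, of s] by (simp add: dist_real_def mult.assoc)
  qed (use L0 in simp)
  then show ?thesis by (rule lipschitz_on_continuous_on)
qed

lemma Bk_nonneg: "Bk k \<subseteq> nonneg"
  by (auto simp: Bk_def nonneg_def)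

lemma B_Linf:
  assumes F: "F \<in> NN" and x: "x \<in> X" and k: "0 < k"
  shows "0 \<le> Linf_norm (Bk k) (\<lambda>\<gamma>. BF F \<gamma> x s) \<and>
    Linf_norm (Bk k) (\<lambda>\<gamma>. BF F \<gamma> x s) \<le> ereal ((1 + real CARD('i) * k) * max L 0)"
proof (rule Linf_bound[OF Bk_sets Bk_pos[OF k]])
  show "continuous_on (Bk k) (\<lambda>\<gamma>. BF F \<gamma> x s)"
    by (rule continuous_on_subset[OF B_cont[OF F x] Bk_nonneg])
  fix \<gamma> :: "real^'i" assume g: "\<gamma> \<in> Bk k"
  then have gn: "\<gamma> \<in> nonneg" using Bk_nonneg by blast
  have "(\<Sum>i\<in>UNIV. \<gamma> $ i) \<le> (\<Sum>i\<in>(UNIV::'i set). k)" using g by (intro sum_mono) (simp add: Bk_def)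
  then have T: "(\<Sum>i\<in>UNIV. \<gamma> $ i) \<le> real CARD('i) * k" by simp
  have T0: "0 \<le> (\<Sum>i\<in>UNIV. \<gamma> $ i)" using gn by (simp add: nonneg_iff sum_nonneg)
  have "\<bar>BF F \<gamma> x s\<bar> \<le> (1 + (\<Sum>i\<in>UNIV. \<gamma> $ i)) * L" by (rule B_abs[OF F x gn])
  also have "\<dots> \<le> (1 + (\<Sum>i\<in>UNIV. \<gamma> $ i)) * max L 0" using T0 by (intro mult_left_mono) auto
  also have "\<dots> \<le> (1 + real CARD('i) * k) * max L 0" using T by (intro mult_right_mono) auto
  finally show "\<bar>BF F \<gamma> x s\<bar> \<le> (1 + real CARD('i) * k) * max L 0" .
qed

lemma B_Mspace:
  assumes F: "F \<in> NN"
  shows "BF F \<in> Mspace se xe X"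
proof -
  define Lp where "Lp = max L 0"
  have Lp0: "0 \<le> Lp" by (simp add: Lp_def)
  define I where "I = real CARD('i)"
  have I0: "0 \<le> I" by (simp add: I_def)
  define c where "c k = (1/2::real) ^ Suc k * (Lp + (I * Lp) * real (Suc k))" for k
  have csum: "summable c" unfolding c_def by (rule sum_lin)
  have c0: "0 \<le> c k" for k unfolding c_def using Lp0 I0 by simp
  define D where "D = suminf c"
  have D0: "0 \<le> D" unfolding D_def by (rule suminf_nonneg[OF csum c0])
  have cD: "(\<Sum>k. ereal (c k)) = ereal D"
    unfolding D_def by (rule sums_unique[symmetric]) (simp add: sums_ereal summable_sums[OF csum])
  define U where "U x s = (\<Sum>k. ereal ((1/2) ^ Suc k) * Linf_norm (Bk (real (Suc k))) (\<lambda>\<gamma>. BF F \<gamma> x s))" for x s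
  have U: "0 \<le> U x s \<and> U x s \<le> ereal D" if x: "x \<in> X" for x s
  proof -
    have t: "0 \<le> ereal ((1/2) ^ Suc k) * Linf_norm (Bk (real (Suc k))) (\<lambda>\<gamma>. BF F \<gamma> x s) \<and>
       ereal ((1/2) ^ Suc k) * Linf_norm (Bk (real (Suc k))) (\<lambda>\<gamma>. BF F \<gamma> x s) \<le> ereal (c k)" for k
    proof -
      have b: "0 \<le> Linf_norm (Bk (real (Suc k))) (\<lambda>\<gamma>. BF F \<gamma> x s) \<and>
         Linf_norm (Bk (real (Suc k))) (\<lambda>\<gamma>. BF F \<gamma> x s) \<le> ereal ((1 + I * real (Suc k)) * Lp)"
        using B_Linf[OF F x, of "real (Suc k)" s] unfolding Lp_def I_def by simp
      have "ereal ((1/2) ^ Suc k) * Linf_norm (Bk (real (Suc k))) (\<lambda>\<gamma>. BF F \<gamma> x s)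
          \<le> ereal ((1/2) ^ Suc k) * ereal ((1 + I * real (Suc k)) * Lp)"
        using b by (intro ereal_mult_left_mono) auto
      also have "\<dots> = ereal (c k)" unfolding c_def by (simp add: algebra_simps)
      finally show ?thesis using b by (simp add: ereal_0_le_mult)
    qed
    have "U x s \<le> (\<Sum>k. ereal (c k))" unfolding U_def
      by (rule suminf_le_pos) (use t in auto)
    moreover have "0 \<le> U x s" unfolding U_def
      by (rule suminf_nonneg[OF summable_ereal_pos]) (use t in auto)
    ultimately show ?thesis using cD by simp
  qed
  define E where "E = (\<Sum>j. (1/2::real) ^ j * D)"
  have Esum: "summable (\<lambda>j. (1/2::real) ^ j * D)" by (intro summable_mult2 summable_geometric) simp
  have T: "(\<Sum>j. (if j \<in> enum_index X then ereal ((1/2) ^ j) else 0) * U (xe j) s) \<le> ereal E" for s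
  proof -
    have "(\<Sum>j. (if j \<in> enum_index X then ereal ((1/2) ^ j) else 0) * U (xe j) s) \<le> (\<Sum>j. ereal ((1/2) ^ j * D))"
    proof (rule suminf_le_pos)
      fix j
      show "0 \<le> (if j \<in> enum_index X then ereal ((1/2) ^ j) else 0) * U (xe j) s"
        using U[OF xe_in, of j s] by (auto intro: ereal_0_le_mult)
      show "(if j \<in> enum_index X then ereal ((1/2) ^ j) else 0) * U (xe j) s \<le> ereal ((1/2) ^ j * D)"
      proof (cases "j \<in> enum_index X")
        case True
        have "ereal ((1/2) ^ j) * U (xe j) s \<le> ereal ((1/2) ^ j) * ereal D"
          using U[OF xe_in[OF True], of s] by (intro ereal_mult_left_mono) auto
        then show ?thesis using True by simp
      next
        case False then show ?thesis using D0 by simp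
      qed
    qed
    also have "\<dots> = ereal E" unfolding E_def
      by (rule sums_unique[symmetric]) (simp add: sums_ereal summable_sums[OF Esum])
    finally show ?thesis .
  qed
  have "M_norm se xe X (BF F) \<le> (\<Sum>i\<in>{1..CARD('s)}. ereal ((1/2) ^ i) * ereal E)"
    unfolding M_norm_def U_def[symmetric]
    by (intro sum_mono ereal_mult_left_mono T) auto
  also have "\<dots> = ereal (\<Sum>i\<in>{1..CARD('s)}. (1/2) ^ i * E)" by (simp add: sum_ereal)
  finally have Mfin: "M_norm se xe X (BF F) < \<infinity>" using le_less_trans by fastforce
  have Lfin: "Linf_norm (Bk (real k)) (\<lambda>\<gamma>. BF F \<gamma> x s) < \<infinity>" if "x \<in> X" "1 \<le> k" for x s k
  proof -
    have "Linf_norm (Bk (real k)) (\<lambda>\<gamma>. BF F \<gamma> x s) \<le> ereal ((1 + real CARD('i) * real k) * max L 0)"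
      using B_Linf[OF F that(1), of "real k" s] that(2) by simp
    then show ?thesis using le_less_trans by fastforce
  qed
  show ?thesis unfolding Mspace_def using Mfin Lfin by blast
qed

theorem Bellman_maps:
  "BF ` NN \<subseteq> NN"
proof
  fix H assume "H \<in> BF ` NN"
  then obtain F where F: "F \<in> NN" and H: "H = BF F" by blast
  have "BF F \<in> NN"
    unfolding Nspace_def mem_Collect_eq
  proof (intro conjI B_Mspace[OF F] ballI allI impI)
    fix x s assume x: "x \<in> X"
    show "convex_on nonneg (\<lambda>\<gamma>. BF F \<gamma> x s)" by (rule B_convex_on[OF F x])
    fix \<gamma>1 \<gamma>2 :: "real^'i" assume "\<gamma>1 \<in> nonneg" "\<gamma>2 \<in> nonneg"
    then show "\<bar>BF F \<gamma>1 x s - BF F \<gamma>2 x s\<bar> \<le> L * (\<Sum>i\<in>UNIV. \<bar>\<gamma>1 $ i - \<gamma>2 $ i\<bar>)"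
      by (rule B_lip[OF F x])
  next
    fix x s and \<gamma> :: "real^'i" and a assume x: "x \<in> X" and g: "\<gamma> \<in> nonneg" and fe: "feasible Ptr beta A zeta p g gbar x s a"
    show "plan_val Ptr beta zeta r x s a + (\<Sum>i\<in>UNIV. \<gamma> $ i * plan_val Ptr beta zeta (g i) x s a) \<le> BF F \<gamma> x s"
      by (rule B_ge[OF F x g fe])
  next
    fix x s and \<gamma> :: "real^'i" assume x: "x \<in> X" and g: "\<gamma> \<in> nonneg"
    show "BF F \<gamma> x s \<le> (1 + (\<Sum>i\<in>UNIV. \<gamma> $ i)) * L" by (rule B_upper[OF F x g])
  qed
  then show "H \<in> NN" using H by simp
qed

end

theorem lemma3p5:
  fixes Ptr :: "'s::finite \<Rightarrow> 's \<Rightarrow> real"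
    and A :: "(real^'n) set"
    and X :: "(real^'m) set"
    and zeta :: "real^'m \<Rightarrow> real^'n \<Rightarrow> 's \<Rightarrow> real^'m"
    and p r :: "real^'m \<Rightarrow> real^'n \<Rightarrow> 's \<Rightarrow> real"
    and g :: "'i::finite \<Rightarrow> real^'m \<Rightarrow> real^'n \<Rightarrow> 's \<Rightarrow> real"
    and gbar :: "'i \<Rightarrow> real"
    and beta :: real
    and se :: "nat \<Rightarrow> 's"
    and xe :: "nat \<Rightarrow> real^'m"
  assumes pi_pos: "\<And>s s'. Ptr s s' > 0"
    and pi_sum: "\<And>s. (\<Sum>s'\<in>UNIV. Ptr s s') = 1"
    and A_fin: "finite A"
    and X_cnt: "countable X"
    and zeta_X: "\<And>x a s. x \<in> X \<Longrightarrow> a \<in> A \<Longrightarrow> zeta x a s \<in> X"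
    and r_bdd: "\<exists>C. \<forall>x\<in>X. \<forall>a\<in>A. \<forall>s. \<bar>r x a s\<bar> \<le> C"
    and g_bdd: "\<And>i. \<exists>C. \<forall>x\<in>X. \<forall>a\<in>A. \<forall>s. \<bar>g i x a s\<bar> \<le> C"
    and beta: "0 < beta" "beta < 1"
    and se_enum: "bij_betw se {1..CARD('s)} UNIV"
    and xe_enum: "bij_betw xe (enum_index X) X"
    and feasible_exists: "\<And>x s. x \<in> X \<Longrightarrow> \<exists>a. feasible Ptr beta A zeta p g gbar x s a"
  shows "Bellman Ptr beta A zeta p r g gbar ` Nspace se xe X Ptr beta A zeta p r g gbar
           \<subseteq> Nspace se xe X Ptr beta A zeta p r g gbar"
proof -
  interpret bell Ptr beta A X zeta p r g gbar se xe
    by unfold_locales (auto intro: less_imp_le pi_pos pi_sum A_fin zeta_X r_bdd g_bdd beta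
        feasible_exists bij_betw_apply[OF xe_enum])
  show ?thesis by (rule Bellman_maps)
qed
end
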